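(* Every strictly convex reflexive monotone ordered Banach space with a closed proper generating cone is both a $\upsilon$-quasi-lattice and a $\mu$-quasi-lattice, and its $\upsilon$- and $\mu$-quasi-suprema coincide.
   Context: An ordered Banach space is a real Banach space $X$ with a proper cone $X_+$ (closed under addition and non-negative scaling, $X_+\cap(-X_+)=\{0\}$); $x\le y$ means $y-x\in X_+$; generating means $X=X_+-X_+$; monotone means $0\le x\le y$ implies $\|x\|\le\|y\|$. Strictly convex: $\|x+y\|=\|x\|+\|y\|$ implies one of $x,y$ is a non-negative multiple of the other. For $A\subseteq X$, $\upsilon(A)$ is the set of upper bounds and $\mu(A)$ the set of minimal upper bounds ($z\in\upsilon(A)$ with $A\le w\le z\Rightarrow w=z$). Let $\sigma_{x,y}(z)=\|z-x\|+\|z-y\|$. $X$ (closed cone) is a $\upsilon$-quasi-lattice (resp. $\mu$-quasi-lattice) if for all $x,y$ the set $\upsilon(\{x,y\})$ (resp. $\mu(\{x,y\})$) is non-empty and contains a unique minimizer of $\sigma_{x,y}$ on it, the $\upsilon$- (resp. $\mu$-) quasi-supremum. *)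

theory Defs
  imports "HOL-Analysis.Analysis"
begin

definition proper_cone :: "'a::real_vector set \<Rightarrow> bool" where
  "proper_cone C \<longleftrightarrow> (\<forall>x\<in>C. \<forall>y\<in>C. x + y \<in> C) \<and> (\<forall>x\<in>C. \<forall>t::real. t \<ge> 0 \<longrightarrow> t *\<^sub>R x \<in> C)
     \<and> C \<inter> uminus ` C = {0}"

definition generating_cone :: "'a::real_vector set \<Rightarrow> bool" where
  "generating_cone C \<longleftrightarrow> (\<forall>x. \<exists>p\<in>C. \<exists>q\<in>C. x = p - q)"

definition cle :: "'a::real_vector set \<Rightarrow> 'a \<Rightarrow> 'a \<Rightarrow> bool" where
  "cle C x y \<longleftrightarrow> y - x \<in> C"

definition monotone_norm :: "'a::real_normed_vector set \<Rightarrow> bool" where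
  "monotone_norm C \<longleftrightarrow> (\<forall>x y. cle C 0 x \<and> cle C x y \<longrightarrow> norm x \<le> norm y)"

definition strictly_convex :: "'a::real_normed_vector itself \<Rightarrow> bool" where
  "strictly_convex _ \<longleftrightarrow> (\<forall>x y::'a. norm (x + y) = norm x + norm y \<longrightarrow>
      (\<exists>t::real. t \<ge> 0 \<and> (x = t *\<^sub>R y \<or> y = t *\<^sub>R x)))"

definition reflexive_space :: "'a::real_normed_vector itself \<Rightarrow> bool" where
  "reflexive_space _ \<longleftrightarrow>
     (\<forall>\<phi> :: ('a \<Rightarrow>\<^sub>L real) \<Rightarrow>\<^sub>L real. \<exists>x::'a. \<forall>f. blinfun_apply \<phi> f = blinfun_apply f x)"

definition upper_bounds_c :: "'a::real_vector set \<Rightarrow> 'a set \<Rightarrow> 'a set" where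
  "upper_bounds_c C A = {z. \<forall>a\<in>A. cle C a z}"

definition min_upper_bounds_c :: "'a::real_vector set \<Rightarrow> 'a set \<Rightarrow> 'a set" where
  "min_upper_bounds_c C A = {z \<in> upper_bounds_c C A.
      \<forall>w. (\<forall>a\<in>A. cle C a w) \<and> cle C w z \<longrightarrow> w = z}"

definition sigma_xy :: "'a::real_normed_vector \<Rightarrow> 'a \<Rightarrow> 'a \<Rightarrow> real" where
  "sigma_xy x y z = norm (z - x) + norm (z - y)"

definition is_minimizer :: "'a set \<Rightarrow> ('a \<Rightarrow> real) \<Rightarrow> 'a \<Rightarrow> bool" where
  "is_minimizer S f z \<longleftrightarrow> z \<in> S \<and> (\<forall>w\<in>S. f z \<le> f w)"

definition has_unique_minimizer :: "'a set \<Rightarrow> ('a \<Rightarrow> real) \<Rightarrow> bool" where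
  "has_unique_minimizer S f \<longleftrightarrow> (\<exists>!z. is_minimizer S f z)"

definition the_minimizer :: "'a set \<Rightarrow> ('a \<Rightarrow> real) \<Rightarrow> 'a" where
  "the_minimizer S f = (THE z. is_minimizer S f z)"

definition upsilon_quasi_lattice :: "'a::real_normed_vector set \<Rightarrow> bool" where
  "upsilon_quasi_lattice C \<longleftrightarrow> closed C \<and> (\<forall>x y.
      upper_bounds_c C {x, y} \<noteq> {} \<and> has_unique_minimizer (upper_bounds_c C {x, y}) (sigma_xy x y))"

definition mu_quasi_lattice :: "'a::real_normed_vector set \<Rightarrow> bool" where
  "mu_quasi_lattice C \<longleftrightarrow> closed C \<and> (\<forall>x y.
      min_upper_bounds_c C {x, y} \<noteq> {} \<and> has_unique_minimizer (min_upper_bounds_c C {x, y}) (sigma_xy x y))"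

definition upsilon_qsup :: "'a::real_normed_vector set \<Rightarrow> 'a \<Rightarrow> 'a \<Rightarrow> 'a" where
  "upsilon_qsup C x y = the_minimizer (upper_bounds_c C {x, y}) (sigma_xy x y)"

definition mu_qsup :: "'a::real_normed_vector set \<Rightarrow> 'a \<Rightarrow> 'a \<Rightarrow> 'a" where
  "mu_qsup C x y = the_minimizer (min_upper_bounds_c C {x, y}) (sigma_xy x y)"

end

theory Submission
  imports Defs
begin


definition goodg :: "('a::real_vector \<Rightarrow> real) \<Rightarrow> ('a \<times> real) set \<Rightarrow> bool" where
 "goodg p G \<longleftrightarrow> (\<forall>x a y b. (x,a)\<in>G \<longrightarrow> (y,b)\<in>G \<longrightarrow> (x+y, a+b) \<in> G)
    \<and> (\<forall>x a t. (x,a)\<in>G \<longrightarrow> (t *\<^sub>R x, t * a) \<in> G)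
    \<and> (\<forall>x a b. (x,a)\<in>G \<longrightarrow> (x,b)\<in>G \<longrightarrow> a = b) \<and> (\<forall>x a. (x,a)\<in>G \<longrightarrow> a \<le> p x)"

lemma goodgD:
  assumes "goodg p G"
  shows goodg_add: "(x,a)\<in>G \<Longrightarrow> (y,b)\<in>G \<Longrightarrow> (x+y, a+b) \<in> G"
   and goodg_scl: "(x,a)\<in>G \<Longrightarrow> (t *\<^sub>R x, t * a) \<in> G"
   and goodg_sv: "(x,a)\<in>G \<Longrightarrow> (x,b)\<in>G \<Longrightarrow> a = b"
   and goodg_dom: "(x,a)\<in>G \<Longrightarrow> a \<le> p x"
  using assms unfolding goodg_def by blast+

lemma hb_step:
  fixes p :: "'a::real_vector \<Rightarrow> real"
  assumes sub: "\<And>x y. p (x+y) \<le> p x + p y" and hom: "\<And>t x. t > 0 \<Longrightarrow> p (t *\<^sub>R x) \<le> t * p x"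
  and M: "goodg p M" "M \<noteq> {}" and v: "\<And>a. (v,a) \<notin> M"
  shows "\<exists>M'. goodg p M' \<and> M \<subseteq> M' \<and> M' \<noteq> M"
proof -
  have add: "\<And>x a y b. (x,a)\<in>M \<Longrightarrow> (y,b)\<in>M \<Longrightarrow> (x+y, a+b) \<in> M"
   and scl: "\<And>x a t. (x,a)\<in>M \<Longrightarrow> (t *\<^sub>R x, t * a) \<in> M"
   and sv: "\<And>x a b. (x,a)\<in>M \<Longrightarrow> (x,b)\<in>M \<Longrightarrow> a = b"
   and dom: "\<And>x a. (x,a)\<in>M \<Longrightarrow> a \<le> p x" using M(1) unfolding goodg_def by blast+
  define S where "S = {a - p (s - v) | s a. (s,a) \<in> M}"
  define c where "c = Sup S"
  have key: "a - p (s - v) \<le> p (s' + v) - a'" if "(s,a)\<in>M" "(s',a')\<in>M" for s a s' a'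
  proof -
    have "a + a' \<le> p (s + s')" using dom[OF add[OF that]] .
    also have "s + s' = (s - v) + (s' + v)" by simp
    also have "p \<dots> \<le> p (s - v) + p (s' + v)" by (rule sub)
    finally show ?thesis by simp
  qed
  obtain s0 a0 where s0: "(s0,a0)\<in>M" using M(2) by auto
  have Sne: "S \<noteq> {}" using s0 unfolding S_def by blast
  have Sbdd: "bdd_above S" unfolding S_def bdd_above_def using key s0 by blast
  have c1: "a - p (s - v) \<le> c" if "(s,a)\<in>M" for s a
    unfolding c_def by (rule cSup_upper[OF _ Sbdd]) (use that S_def in blast)
  have c2: "c \<le> p (s' + v) - a'" if "(s',a')\<in>M" for s' a'
    unfolding c_def by (rule cSup_least[OF Sne]) (use that key S_def in blast)
  define M' where "M' = {(x + t *\<^sub>R v, a + t * c) | x a t. (x,a)\<in>M}"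
  have "goodg p M'"
    unfolding goodg_def
  proof (intro conjI allI impI)
    fix x a y b
    assume "(x,a)\<in>M'" "(y,b)\<in>M'"
    then obtain x1 a1 t1 x2 a2 t2 where "(x1,a1)\<in>M" "(x2,a2)\<in>M" "x = x1 + t1 *\<^sub>R v" "a = a1 + t1*c"
       "y = x2 + t2 *\<^sub>R v" "b = a2 + t2*c" unfolding M'_def by blast
    then show "(x+y, a+b) \<in> M'" unfolding M'_def
      by (intro CollectI exI[of _ "x1+x2"] exI[of _ "a1+a2"] exI[of _ "t1+t2"])
         (auto simp: add algebra_simps)
  next
    fix x a t
    assume "(x,a)\<in>M'"
    then obtain x1 a1 t1 where "(x1,a1)\<in>M" "x = x1 + t1 *\<^sub>R v" "a = a1 + t1*c"
      unfolding M'_def by blast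
    then show "(t *\<^sub>R x, t*a) \<in> M'" unfolding M'_def
      by (intro CollectI exI[of _ "t *\<^sub>R x1"] exI[of _ "t*a1"] exI[of _ "t*t1"])
         (use scl[of x1 a1 t] in \<open>auto simp: algebra_simps\<close>)
  next
    fix x a b
    assume "(x,a)\<in>M'" "(x,b)\<in>M'"
    then obtain x1 a1 t1 x2 a2 t2 where h: "(x1,a1)\<in>M" "(x2,a2)\<in>M" "x = x1 + t1 *\<^sub>R v" "a = a1 + t1*c"
       "x = x2 + t2 *\<^sub>R v" "b = a2 + t2*c" unfolding M'_def by blast
    have "t1 = t2"
    proof (rule ccontr)
      assume ne: "t1 \<noteq> t2"
      have "(x2 + (-1) *\<^sub>R x1, a2 + (-1) * a1) \<in> M" using h by (intro add scl) auto
      then have "((1/(t1 - t2)) *\<^sub>R (x2 + (-1) *\<^sub>R x1), (1/(t1-t2)) * (a2 + (-1) * a1)) \<in> M"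
        by (rule scl)
      moreover have "(1/(t1 - t2)) *\<^sub>R (x2 + (-1) *\<^sub>R x1) = v"
      proof -
        have "x2 - x1 = (t1 - t2) *\<^sub>R v" using h(3,5) by (simp add: algebra_simps)
        then show ?thesis using ne by simp
      qed
      ultimately show False using v by simp
    qed
    then have "x1 = x2" using h by simp
    then have "a1 = a2" using sv h by blast
    then show "a = b" using h \<open>t1 = t2\<close> by simp
  next
    fix x a
    assume "(x,a)\<in>M'"
    then obtain x1 a1 t where h: "(x1,a1)\<in>M" "x = x1 + t *\<^sub>R v" "a = a1 + t*c"
      unfolding M'_def by blast
    consider "t > 0" | "t = 0" | "t < 0" by linarith
    then show "a \<le> p x"
    proof cases
      case 1
      have m: "((1/t) *\<^sub>R x1, (1/t) * a1) \<in> M" by (rule scl[OF h(1)])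
      have "c \<le> p ((1/t) *\<^sub>R x1 + v) - (1/t) * a1" by (rule c2[OF m])
      also have "(1/t) *\<^sub>R x1 + v = (1/t) *\<^sub>R x" using 1 h(2) by (simp add: algebra_simps)
      also have "p ((1/t) *\<^sub>R x) \<le> (1/t) * p x" using 1 hom[of "1/t" x] by simp
      finally have "c \<le> (1/t) * p x - (1/t) * a1" by simp
      then have "t * c \<le> t * ((1/t) * p x - (1/t) * a1)" using 1 by (simp add: mult_left_mono)
      then show ?thesis using 1 h(3) by (simp add: algebra_simps)
    next
      case 2 then show ?thesis using h dom by simp
    next
      case 3
      define u where "u = -t"
      have u: "u > 0" using 3 u_def by simp
      have m: "((1/u) *\<^sub>R x1, (1/u) * a1) \<in> M" by (rule scl[OF h(1)])
      have "(1/u) * a1 - p ((1/u) *\<^sub>R x1 - v) \<le> c" by (rule c1[OF m])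
      moreover have "(1/u) *\<^sub>R x1 - v = (1/u) *\<^sub>R x" using u h(2) u_def by (simp add: algebra_simps)
      moreover have "p ((1/u) *\<^sub>R x) \<le> (1/u) * p x" using u hom[of "1/u" x] by simp
      ultimately have "(1/u) * a1 - (1/u) * p x \<le> c" by simp
      then have "u * ((1/u) * a1 - (1/u) * p x) \<le> u * c" using u by (simp add: mult_left_mono)
      then show ?thesis using u h(3) u_def by (simp add: algebra_simps)
    qed
  qed
  moreover have "M \<subseteq> M'" unfolding M'_def by force
  moreover have "(v, c) \<in> M'"
  proof -
    have "(0 *\<^sub>R s0, 0 * a0) \<in> M" by (rule scl[OF s0])
    then show ?thesis unfolding M'_def
      by (intro CollectI exI[of _ 0] exI[of _ "0::real"] exI[of _ "1::real"]) auto
  qed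
  then have "M' \<noteq> M" using v by blast
  ultimately show ?thesis by blast
qed

lemma hb_ext:
  fixes p :: "'a::real_vector \<Rightarrow> real"
  assumes sub: "\<And>x y. p (x+y) \<le> p x + p y" and hom: "\<And>t x. t > 0 \<Longrightarrow> p (t *\<^sub>R x) \<le> t * p x"
  and G0: "goodg p G0" "G0 \<noteq> {}"
  shows "\<exists>f. linear f \<and> (\<forall>x. f x \<le> p x) \<and> (\<forall>x a. (x,a)\<in>G0 \<longrightarrow> f x = a)"
proof -
  define A where "A = {G. G0 \<subseteq> G \<and> goodg p G}"
  have "\<exists>M\<in>A. \<forall>X\<in>A. M \<subseteq> X \<longrightarrow> X = M"
  proof (rule subset_Zorn_nonempty)
    show "A \<noteq> {}" using G0 A_def by blast
  next
    fix Cs assume ne: "Cs \<noteq> {}" and ch: "subset.chain A Cs"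
    have CA: "Cs \<subseteq> A" and tot: "\<And>X Y. X\<in>Cs \<Longrightarrow> Y\<in>Cs \<Longrightarrow> X \<subseteq> Y \<or> Y \<subseteq> X"
      using ch unfolding subset_chain_def by auto
    have gd: "\<And>X. X \<in> Cs \<Longrightarrow> goodg p X" using CA A_def by blast
    have two: "\<exists>Z\<in>Cs. u \<in> Z \<and> w \<in> Z" if "u \<in> \<Union>Cs" "w \<in> \<Union>Cs" for u w
    proof -
      from that(1) obtain X where "X\<in>Cs" "u\<in>X" by (rule UnionE)
      moreover from that(2) obtain Y where "Y\<in>Cs" "w\<in>Y" by (rule UnionE)
      ultimately show ?thesis using tot[of X Y] by blast
    qed
    have "goodg p (\<Union>Cs)" unfolding goodg_def
    proof (intro conjI allI impI)
      fix x a y b assume "(x,a)\<in>\<Union>Cs" "(y,b)\<in>\<Union>Cs"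
      then obtain Z where "Z\<in>Cs" "(x,a)\<in>Z" "(y,b)\<in>Z" using two by blast
      then show "(x+y,a+b)\<in>\<Union>Cs" using goodg_add[OF gd[of Z]] by blast
    next
      fix x a t assume "(x,a)\<in>\<Union>Cs"
      then obtain Z where "Z\<in>Cs" "(x,a)\<in>Z" by blast
      then show "(t *\<^sub>R x, t * a)\<in>\<Union>Cs" using goodg_scl[OF gd[of Z]] by blast
    next
      fix x a b assume "(x,a)\<in>\<Union>Cs" "(x,b)\<in>\<Union>Cs"
      then obtain Z where "Z\<in>Cs" "(x,a)\<in>Z" "(x,b)\<in>Z" using two by blast
      then show "a = b" using goodg_sv[OF gd[of Z]] by blast
    next
      fix x a assume "(x,a)\<in>\<Union>Cs"
      then obtain Z where "Z\<in>Cs" "(x,a)\<in>Z" by blast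
      then show "a \<le> p x" using goodg_dom[OF gd[of Z]] by blast
    qed
    moreover have "G0 \<subseteq> \<Union>Cs" using ne CA A_def by blast
    ultimately show "\<Union>Cs \<in> A" using A_def by blast
  qed
  then obtain M where MA: "M \<in> A" and max: "\<And>X. X\<in>A \<Longrightarrow> M \<subseteq> X \<Longrightarrow> X = M" by blast
  have gM: "goodg p M" and G0M: "G0 \<subseteq> M" using MA A_def by auto
  have Mne: "M \<noteq> {}" using G0M G0(2) by blast
  have tot: "\<exists>a. (v,a) \<in> M" for v
  proof (rule ccontr)
    assume "\<nexists>a. (v,a) \<in> M"
    then obtain M' where "goodg p M'" "M \<subseteq> M'" "M' \<noteq> M"
      using hb_step[OF sub hom gM Mne] by blast
    then show False using max[of M'] G0M A_def by blast
  qed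
  have add: "\<And>x a y b. (x,a)\<in>M \<Longrightarrow> (y,b)\<in>M \<Longrightarrow> (x+y, a+b) \<in> M"
   and scl: "\<And>x a t. (x,a)\<in>M \<Longrightarrow> (t *\<^sub>R x, t * a) \<in> M"
   and sv: "\<And>x a b. (x,a)\<in>M \<Longrightarrow> (x,b)\<in>M \<Longrightarrow> a = b"
   and dom: "\<And>x a. (x,a)\<in>M \<Longrightarrow> a \<le> p x" using gM unfolding goodg_def by blast+
  define f where "f x = (THE a. (x,a)\<in>M)" for x
  have fM: "(x, f x) \<in> M" for x
    unfolding f_def using tot[of x] sv by (metis theI)
  have fe: "f x = a" if "(x,a)\<in>M" for x a using sv[OF that fM] by simp
  have "linear f"
  proof (rule linearI)
    show "f (x + y) = f x + f y" for x y using fe[OF add[OF fM fM]] .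
    show "f (c *\<^sub>R x) = c *\<^sub>R f x" for c x using fe[OF scl[OF fM]] by simp
  qed
  moreover have "\<forall>x. f x \<le> p x" using dom fM by blast
  moreover have "\<forall>x a. (x,a)\<in>G0 \<longrightarrow> f x = a" using fe G0M by blast
  ultimately show ?thesis by blast
qed

lemma hb_point:
  fixes p :: "'a::real_vector \<Rightarrow> real"
  assumes sub: "\<And>x y. p (x+y) \<le> p x + p y" and hom: "\<And>t x. t > 0 \<Longrightarrow> p (t *\<^sub>R x) \<le> t * p x"
  and c: "c \<le> p v" "- c \<le> p (- v)"
  shows "\<exists>f. linear f \<and> (\<forall>x. f x \<le> p x) \<and> f v = c"
proof -
  define G0 where "G0 = {(t *\<^sub>R v, t * c) | t. True}"
  have p0: "0 \<le> p 0" using sub[of 0 0] by simp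
  have p0': "p 0 \<le> 0" using hom[of "1/2" 0] by simp
  have "goodg p G0" unfolding goodg_def
  proof (intro conjI allI impI)
    fix x a y b assume "(x,a)\<in>G0" "(y,b)\<in>G0"
    then obtain t s where "x = t *\<^sub>R v" "a = t*c" "y = s *\<^sub>R v" "b = s*c" using G0_def by blast
    then show "(x+y,a+b)\<in>G0" unfolding G0_def
      by (intro CollectI exI[of _ "t+s"]) (auto simp: algebra_simps)
  next
    fix x a r assume "(x,a)\<in>G0"
    then obtain t where "x = t *\<^sub>R v" "a = t*c" using G0_def by blast
    then show "(r *\<^sub>R x, r*a)\<in>G0" unfolding G0_def
      by (intro CollectI exI[of _ "r*t"]) (auto simp: algebra_simps)
  next
    fix x a b assume "(x,a)\<in>G0" "(x,b)\<in>G0"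
    then obtain t s where h: "x = t *\<^sub>R v" "a = t*c" "x = s *\<^sub>R v" "b = s*c" using G0_def by blast
    show "a = b"
    proof (cases "v = 0")
      case True
      then have "c \<le> 0" "0 \<le> c" using c p0 p0' by auto
      then show ?thesis using h by simp
    next
      case False
      then have "t = s" using h by (metis scaleR_cancel_right)
      then show ?thesis using h by simp
    qed
  next
    fix x a assume "(x,a)\<in>G0"
    then obtain t where h: "x = t *\<^sub>R v" "a = t*c" using G0_def by blast
    consider "t > 0" | "t = 0" | "t < 0" by linarith
    then show "a \<le> p x"
    proof cases
      case 1
      have "p v = p ((1/t) *\<^sub>R x)" using 1 h by simp
      also have "\<dots> \<le> (1/t) * p x" using hom[of "1/t" x] 1 by simp
      finally have "t * c \<le> t * ((1/t) * p x)" using c 1 by (intro mult_left_mono) auto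
      then show ?thesis using 1 h by simp
    next
      case 2 then show ?thesis using h p0 by simp
    next
      case 3
      have "p (-v) = p ((1/(-t)) *\<^sub>R x)" using 3 h by simp
      also have "\<dots> \<le> (1/(-t)) * p x" using hom[of "1/(-t)" x] 3 by simp
      finally have "(-t) * (-c) \<le> (-t) * ((1/(-t)) * p x)" using c 3 by (intro mult_left_mono) auto
      then show ?thesis using 3 h by simp
    qed
  qed
  moreover have "G0 \<noteq> {}" using G0_def by blast
  ultimately obtain f where "linear f" "\<forall>x. f x \<le> p x" "\<forall>x a. (x,a)\<in>G0 \<longrightarrow> f x = a"
    using hb_ext[OF sub hom] by blast
  moreover have "(v, c) \<in> G0" unfolding G0_def by (intro CollectI exI[of _ 1]) auto
  ultimately show ?thesis by blast
qed

lemma hb_bounded: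
  fixes p :: "'a::real_normed_vector \<Rightarrow> real"
  assumes sub: "\<And>x y. p (x+y) \<le> p x + p y" and hom: "\<And>t x. t > 0 \<Longrightarrow> p (t *\<^sub>R x) \<le> t * p x"
  and c: "c \<le> p v" "- c \<le> p (- v)" and K: "\<And>x. p x \<le> K * norm x"
  shows "\<exists>f::'a \<Rightarrow>\<^sub>L real. (\<forall>x. blinfun_apply f x \<le> p x) \<and> blinfun_apply f v = c"
proof -
  obtain f where f: "linear f" "\<forall>x. f x \<le> p x" "f v = c" using hb_point[OF sub hom c] by blast
  have "bounded_linear f"
  proof (rule bounded_linear_intro)
    show "f (x + y) = f x + f y" for x y using f(1) by (simp add: linear_add)
    show "f (r *\<^sub>R x) = r *\<^sub>R f x" for r x using f(1) by (simp add: linear_scale)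
    show "norm (f x) \<le> norm x * K" for x
    proof -
      have "f x \<le> K * norm x" using f(2) K order_trans by blast
      moreover have "- f x \<le> K * norm x"
      proof -
        have "f (-x) \<le> K * norm (-x)" using f(2) K order_trans by blast
        then show ?thesis using f(1) by (simp add: linear_neg)
      qed
      ultimately show ?thesis by (simp add: abs_le_iff mult.commute)
    qed
  qed
  then show ?thesis using f by (intro exI[of _ "Blinfun f"]) (simp add: bounded_linear_Blinfun_apply)
qed



lemma le_infdistI: "A \<noteq> {} \<Longrightarrow> (\<And>a. a\<in>A \<Longrightarrow> r \<le> dist x a) \<Longrightarrow> r \<le> infdist x A"
  unfolding infdist_def by (simp add: cINF_greatest)

lemma proper_coneD:
  assumes "proper_cone C"
  shows cone_add: "x\<in>C \<Longrightarrow> y\<in>C \<Longrightarrow> x + y \<in> C"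
    and cone_scl: "x\<in>C \<Longrightarrow> t \<ge> 0 \<Longrightarrow> t *\<^sub>R x \<in> C"
    and cone_0: "0 \<in> C"
    and cone_anti: "x\<in>C \<Longrightarrow> -x \<in> C \<Longrightarrow> x = 0"
proof -
  have a: "\<forall>x\<in>C. \<forall>y\<in>C. x + y \<in> C" and s: "\<forall>x\<in>C. \<forall>t::real. t \<ge> 0 \<longrightarrow> t *\<^sub>R x \<in> C"
    and h: "C \<inter> uminus ` C = {0}" using assms unfolding proper_cone_def by auto
  show "x\<in>C \<Longrightarrow> y\<in>C \<Longrightarrow> x + y \<in> C" using a by simp
  show "x\<in>C \<Longrightarrow> t \<ge> 0 \<Longrightarrow> t *\<^sub>R x \<in> C" using s by simp
  have "0 \<in> C \<inter> uminus ` C" using h by simp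
  then show "0 \<in> C" by simp
  show "x\<in>C \<Longrightarrow> -x \<in> C \<Longrightarrow> x = 0"
  proof -
    assume "x\<in>C" "-x\<in>C"
    then have "x \<in> uminus ` C" by (metis image_eqI minus_minus)
    then have "x \<in> C \<inter> uminus ` C" using \<open>x\<in>C\<close> by simp
    then show "x = 0" using h by simp
  qed
qed

lemma sep_cone:
  fixes C :: "'a::real_normed_vector set"
  assumes pc: "proper_cone C" and cl: "closed C" and v: "v \<notin> C"
  shows "\<exists>f::'a \<Rightarrow>\<^sub>L real. blinfun_apply f v > 0 \<and> (\<forall>c\<in>C. blinfun_apply f c \<le> 0)"
proof -
  have ne: "C \<noteq> {}" using cone_0[OF pc] by blast
  define p where "p y = infdist y C" for y
  have sub: "p (x+y) \<le> p x + p y" for x y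
  proof -
    have "p (x+y) - dist y c2 \<le> p x" if c2: "c2 \<in> C" for c2
    proof -
      have "p (x+y) - dist y c2 \<le> dist x c1" if c1: "c1\<in>C" for c1
      proof -
        have "p (x+y) \<le> dist (x+y) (c1+c2)" unfolding p_def
          by (rule infdist_le) (rule cone_add[OF pc c1 c2])
        also have "\<dots> \<le> dist x c1 + dist y c2"
        proof -
          have e: "x + y - (c1 + c2) = (x - c1) + (y - c2)" by simp
          show ?thesis unfolding dist_norm e by (rule norm_triangle_ineq)
        qed
        finally show ?thesis by simp
      qed
      then show ?thesis unfolding p_def by (intro le_infdistI[OF ne]) auto
    qed
    then have "p (x+y) - p x \<le> dist y c2" if "c2\<in>C" for c2 using that by (smt (verit))
    then have "p (x+y) - p x \<le> p y" unfolding p_def by (intro le_infdistI[OF ne]) auto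
    then show ?thesis by simp
  qed
  have hom: "p (t *\<^sub>R x) \<le> t * p x" if t: "t > 0" for t x
  proof -
    have "p (t *\<^sub>R x) / t \<le> dist x c" if c: "c\<in>C" for c
    proof -
      have "p (t *\<^sub>R x) \<le> dist (t *\<^sub>R x) (t *\<^sub>R c)" unfolding p_def
        by (rule infdist_le) (rule cone_scl[OF pc c], use t in simp)
      also have "\<dots> = t * dist x c"
      proof -
        have "t *\<^sub>R x - t *\<^sub>R c = t *\<^sub>R (x - c)" by (simp add: scaleR_right_diff_distrib)
        then show ?thesis unfolding dist_norm using t by simp
      qed
      finally show ?thesis using t by (simp add: divide_le_eq mult.commute)
    qed
    then have "p (t *\<^sub>R x) / t \<le> p x" unfolding p_def by (intro le_infdistI[OF ne]) auto
    then show ?thesis using t by (simp add: divide_le_eq mult.commute)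
  qed
  have K: "p x \<le> 1 * norm x" for x
    using infdist_le[OF cone_0[OF pc], of x] unfolding p_def by simp
  have pv: "p v > 0"
    using in_closed_iff_infdist_zero[OF cl ne, of v] v infdist_nonneg[of v C] unfolding p_def by simp
  have "- p v \<le> p (-v)" using pv infdist_nonneg[of "-v" C] unfolding p_def by simp
  then obtain f :: "'a \<Rightarrow>\<^sub>L real" where f: "\<forall>x. blinfun_apply f x \<le> p x" "blinfun_apply f v = p v"
    using hb_bounded[of p, OF sub hom order_refl _ K] by blast
  have "\<forall>c\<in>C. blinfun_apply f c \<le> 0"
  proof
    fix c assume "c\<in>C"
    then have "p c = 0" unfolding p_def by simp
    then show "blinfun_apply f c \<le> 0" using f(1) by metis
  qed
  then show ?thesis using f pv by (intro exI[of _ f]) simp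
qed

lemma norming:
  fixes w :: "'a::real_normed_vector"
  shows "\<exists>f::'a \<Rightarrow>\<^sub>L real. (\<forall>x. blinfun_apply f x \<le> norm x) \<and> blinfun_apply f w = norm w"
proof -
  have "\<exists>f::'a \<Rightarrow>\<^sub>L real. (\<forall>x. blinfun_apply f x \<le> norm x) \<and> blinfun_apply f w = norm w"
    by (rule hb_bounded[of norm "norm w" w 1]) (simp_all add: norm_triangle_ineq)
  then show ?thesis .
qed



lemma weak_cluster:
  fixes z :: "nat \<Rightarrow> 'a::real_normed_vector"
  assumes refl: "reflexive_space TYPE('a)" and B: "\<And>n. norm (z n) \<le> B"
  shows "\<exists>x. \<forall>(f::'a \<Rightarrow>\<^sub>L real) (r::real). (\<forall>e>0. \<exists>N. \<forall>n\<ge>N. blinfun_apply f (z n) \<le> r + e) \<longrightarrow> blinfun_apply f x \<le> r"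
proof -
  have B0: "0 \<le> B" using B[of 0] norm_ge_zero[of "z 0"] by linarith
  have bnd: "\<bar>blinfun_apply f (z n)\<bar> \<le> norm f * B" for f :: "'a \<Rightarrow>\<^sub>L real" and n
  proof -
    have "\<bar>blinfun_apply f (z n)\<bar> \<le> norm f * norm (z n)" using norm_blinfun[of f "z n"] by simp
    also have "\<dots> \<le> norm f * B" using B by (intro mult_left_mono) auto
    finally show ?thesis .
  qed
  define S where "S N f = (SUP n. blinfun_apply f (z (n+N)))" for N and f :: "'a \<Rightarrow>\<^sub>L real"
  have bdd: "bdd_above (range (\<lambda>n. blinfun_apply f (z (n+N))))" for f :: "'a \<Rightarrow>\<^sub>L real" and N
  proof (rule bdd_aboveI)
    fix y :: real assume "y \<in> range (\<lambda>n. blinfun_apply f (z (n+N)))"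
    then obtain n where "y = blinfun_apply f (z (n+N))" by blast
    then show "y \<le> norm f * B" using bnd[of f "n+N"] by (simp add: abs_le_iff)
  qed
  have Su: "blinfun_apply f (z (n+N)) \<le> S N f" for f n N
    unfolding S_def by (rule cSUP_upper[OF _ bdd]) simp
  have Sl: "S N f \<le> norm f * B" for N f
    unfolding S_def by (rule cSUP_least) (simp, use bnd[of f] in \<open>simp add: abs_le_iff\<close>)
  have Sge: "- (norm f * B) \<le> S N f" for N f
    using Su[of f 0 N] bnd[of f N] by (simp add: abs_le_iff)
  define p where "p f = (INF N. S N f)" for f
  have bddb: "bdd_below (range (\<lambda>N. S N f))" for f
  proof (rule bdd_belowI)
    fix y :: real assume "y \<in> range (\<lambda>N. S N f)"
    then obtain N where "y = S N f" by blast
    then show "- (norm f * B) \<le> y" using Sge[of f N] by simp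
  qed
  have pl: "p f \<le> S N f" for f N unfolding p_def by (rule cINF_lower[OF bddb]) simp
  have pg: "r \<le> p f" if "\<And>N. r \<le> S N f" for r f unfolding p_def by (rule cINF_greatest) (use that in auto)
  have Smono: "S M f \<le> S N f" if "N \<le> M" for N M f
    unfolding S_def[of M] proof (rule cSUP_least)
    fix n
    have "n + M - N + N = n + M" using that by simp
    then show "blinfun_apply f (z (n+M)) \<le> S N f" using Su[of f "n + M - N" N] by simp
  qed simp
  have Sadd: "S N (f+g) \<le> S N f + S N g" for N f g
    unfolding S_def[of N "f+g"] proof (rule cSUP_least)
    fix n show "blinfun_apply (f+g) (z (n+N)) \<le> S N f + S N g"
      using Su[of f n N] Su[of g n N] by (simp add: plus_blinfun.rep_eq)
  qed simp
  have sub: "p (f+g) \<le> p f + p g" for f g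
  proof -
    have "p (f+g) - S N2 g \<le> S N1 f" for N1 N2
    proof -
      have "p (f+g) \<le> S (max N1 N2) (f+g)" by (rule pl)
      also have "\<dots> \<le> S (max N1 N2) f + S (max N1 N2) g" by (rule Sadd)
      also have "\<dots> \<le> S N1 f + S N2 g" using Smono[of N1 "max N1 N2" f] Smono[of N2 "max N1 N2" g] by simp
      finally show ?thesis by simp
    qed
    then have "p (f+g) - S N2 g \<le> p f" for N2 by (intro pg)
    then have "p (f+g) - p f \<le> S N2 g" for N2 by (smt (verit))
    then have "p (f+g) - p f \<le> p g" by (intro pg)
    then show ?thesis by simp
  qed
  have hom: "p (t *\<^sub>R f) \<le> t * p f" if t: "t > 0" for t f
  proof -
    have "p (t *\<^sub>R f) / t \<le> S N f" for N
    proof -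
      have "S N (t *\<^sub>R f) \<le> t * S N f"
        unfolding S_def[of N "t *\<^sub>R f"] proof (rule cSUP_least)
        fix n show "blinfun_apply (t *\<^sub>R f) (z (n+N)) \<le> t * S N f"
          using Su[of f n N] t by (simp add: scaleR_blinfun.rep_eq)
      qed simp
      then have "p (t *\<^sub>R f) \<le> t * S N f" using pl[of "t *\<^sub>R f" N] by simp
      then show ?thesis using t by (simp add: divide_le_eq mult.commute)
    qed
    then have "p (t *\<^sub>R f) / t \<le> p f" by (intro pg)
    then show ?thesis using t by (simp add: divide_le_eq mult.commute)
  qed
  have K: "p f \<le> B * norm f" for f using pl[of f 0] Sl[of 0 f] by (simp add: mult.commute)
  have p0: "0 \<le> p 0" by (rule pg) (use Sge[of 0] in simp)
  obtain \<Phi> :: "('a \<Rightarrow>\<^sub>L real) \<Rightarrow>\<^sub>L real" where \<Phi>: "\<forall>f. blinfun_apply \<Phi> f \<le> p f"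
    using hb_bounded[of p 0 0 B, OF sub hom _ _ K] p0 by auto
  obtain x where x: "\<And>f. blinfun_apply \<Phi> f = blinfun_apply f x"
    using refl unfolding reflexive_space_def by blast
  have "blinfun_apply f x \<le> r" if h: "\<forall>e>0. \<exists>N. \<forall>n\<ge>N. blinfun_apply f (z n) \<le> r + e" for f :: "'a \<Rightarrow>\<^sub>L real" and r
  proof -
    have "p f \<le> r"
    proof (rule field_le_epsilon)
      fix e :: real assume "e > 0"
      then obtain N where N: "\<And>n. n \<ge> N \<Longrightarrow> blinfun_apply f (z n) \<le> r + e" using h by blast
      have "S N f \<le> r + e" unfolding S_def by (rule cSUP_least) (use N in auto)
      then show "p f \<le> r + e" using pl[of f N] by simp
    qed
    then show ?thesis using \<Phi> x by (metis order_trans)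
  qed
  then show ?thesis by blast
qed



lemma ub_eq: "upper_bounds_c C {a,b} = {z. z - a \<in> C \<and> z - b \<in> C}"
  by (auto simp: upper_bounds_c_def cle_def)

lemma mono_normD:
  assumes "monotone_norm C" "x \<in> C" "y - x \<in> C"
  shows "norm x \<le> norm y"
  using assms unfolding monotone_norm_def cle_def by auto

lemma exists_min:
  fixes C :: "'a::real_normed_vector set" and a b :: 'a
  assumes pc: "proper_cone C" and cl: "closed C" and gen: "generating_cone C"
    and refl: "reflexive_space TYPE('a)"
  defines "V \<equiv> {z. z - a \<in> C \<and> z - b \<in> C}"
  shows "\<exists>x\<in>V. \<forall>w\<in>V. sigma_xy a b x \<le> sigma_xy a b w"
proof -
  let ?s = "sigma_xy a b"
  obtain p q where pq: "p \<in> C" "q \<in> C" "a - b = p - q" using gen unfolding generating_cone_def by blast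
  have "a + q - b = p" using pq(3) by (simp add: algebra_simps)
  then have "a + q \<in> V" unfolding V_def using pq by simp
  then have Vne: "V \<noteq> {}" by blast
  have sne: "?s ` V \<noteq> {}" using Vne by simp
  have s0: "0 \<le> ?s w" for w unfolding sigma_xy_def by simp
  have sbdd: "bdd_below (?s ` V)" using s0 by (intro bdd_belowI[of _ 0]) auto
  define m where "m = Inf (?s ` V)"
  have mle: "m \<le> ?s w" if "w \<in> V" for w unfolding m_def by (rule cInf_lower) (use that sbdd in auto)
  have "\<exists>z. z \<in> V \<and> ?s z < m + 1 / (real n + 1)" for n
  proof -
    have "Inf (?s ` V) < m + 1 / (real n + 1)" unfolding m_def by (simp add: add_pos_pos)
    then obtain y where "y \<in> ?s ` V" "y < m + 1 / (real n + 1)" using cInf_lessD[OF sne] by blast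
    then show ?thesis by blast
  qed
  then obtain z where z: "\<And>n. z n \<in> V" "\<And>n. ?s (z n) < m + 1 / (real n + 1)" by metis
  have zb: "norm (z n) \<le> norm a + (m + 1)" for n
  proof -
    have "norm (z n) \<le> norm (z n - a) + norm a" by (metis norm_triangle_sub add.commute)
    also have "norm (z n - a) \<le> ?s (z n)" unfolding sigma_xy_def by simp
    also have "?s (z n) \<le> m + 1"
    proof -
      have "1 / (real n + 1) \<le> 1" by (simp add: divide_le_eq)
      then show ?thesis using z(2)[of n] by linarith
    qed
    finally show ?thesis by simp
  qed
  obtain x where x: "\<And>(f::'a \<Rightarrow>\<^sub>L real) (r::real). (\<forall>e>0. \<exists>N. \<forall>n\<ge>N. blinfun_apply f (z n) \<le> r + e) \<Longrightarrow> blinfun_apply f x \<le> r"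
    using weak_cluster[of z "norm a + (m + 1)", OF refl zb] by blast
  have inC: "x - c \<in> C" if c: "\<And>n. z n - c \<in> C" for c
  proof (rule ccontr)
    assume "x - c \<notin> C"
    then obtain f :: "'a \<Rightarrow>\<^sub>L real" where f: "blinfun_apply f (x - c) > 0" "\<forall>c\<in>C. blinfun_apply f c \<le> 0"
      using sep_cone[OF pc cl] by blast
    have "blinfun_apply f x \<le> blinfun_apply f c"
    proof (rule x)
      have "blinfun_apply f (z n) \<le> blinfun_apply f c" for n
      proof -
        have "blinfun_apply f (z n - c) \<le> 0" using f(2) c by blast
        then show ?thesis by (simp add: blinfun.diff_right)
      qed
      then show "\<forall>e>0. \<exists>N. \<forall>n\<ge>N. blinfun_apply f (z n) \<le> blinfun_apply f c + e"
        by (meson add_increasing2 less_imp_le)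
    qed
    then show False using f(1) by (simp add: blinfun.diff_right)
  qed
  have xV: "x \<in> V" unfolding V_def using inC z(1) unfolding V_def by blast
  obtain g :: "'a \<Rightarrow>\<^sub>L real" where g: "\<forall>y. blinfun_apply g y \<le> norm y" "blinfun_apply g (x - a) = norm (x - a)"
    using norming by blast
  obtain h :: "'a \<Rightarrow>\<^sub>L real" where h: "\<forall>y. blinfun_apply h y \<le> norm y" "blinfun_apply h (x - b) = norm (x - b)"
    using norming by blast
  have "blinfun_apply (g + h) x \<le> m + blinfun_apply g a + blinfun_apply h b"
  proof (rule x, intro allI impI)
    fix e :: real assume e: "e > 0"
    obtain N where N: "inverse (real (Suc N)) < e" using reals_Archimedean[OF e] by blast
    show "\<exists>N. \<forall>n\<ge>N. blinfun_apply (g + h) (z n) \<le> m + blinfun_apply g a + blinfun_apply h b + e"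
    proof (intro exI[of _ N] allI impI)
      fix n assume n: "n \<ge> N"
      have "blinfun_apply (g + h) (z n) = blinfun_apply g (z n - a) + blinfun_apply h (z n - b) + blinfun_apply g a + blinfun_apply h b"
        by (simp add: plus_blinfun.rep_eq blinfun.diff_right)
      also have "\<dots> \<le> ?s (z n) + blinfun_apply g a + blinfun_apply h b"
        using g(1)[rule_format, of "z n - a"] h(1)[rule_format, of "z n - b"] unfolding sigma_xy_def by simp
      also have "?s (z n) \<le> m + e"
      proof -
        have "1 / (real n + 1) \<le> inverse (real (Suc N))" using n
          by (simp add: divide_simps)
        then show ?thesis using z(2)[of n] N by linarith
      qed
      finally show "blinfun_apply (g + h) (z n) \<le> m + blinfun_apply g a + blinfun_apply h b + e" by simp
    qed
  qed
  then have "blinfun_apply g (x - a) + blinfun_apply h (x - b) \<le> m"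
    by (simp add: plus_blinfun.rep_eq blinfun.diff_right)
  then have "?s x \<le> m" using g h unfolding sigma_xy_def by simp
  then show ?thesis using xV mle by (meson order_trans)
qed

lemma half_half: "(1/2) *\<^sub>R a + (1/2) *\<^sub>R a = (a::'a::real_vector)"
  by (simp flip: scaleR_add_left)

lemma norm_eq_of_order:
  fixes C :: "'a::real_normed_vector set"
  assumes mn: "monotone_norm C"
    and z1: "z1 - a \<in> C" "z1 - b \<in> C" and z2: "z2 - a \<in> C" "z2 - b \<in> C"
    and eq: "sigma_xy a b z1 = sigma_xy a b z2" and ord: "z2 - z1 \<in> C"
  shows "norm (z1 - a) = norm (z2 - a)"
proof -
  have d1: "(z2 - a) - (z1 - a) \<in> C" "(z2 - b) - (z1 - b) \<in> C" using ord by simp_all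
  have n1: "norm (z1 - a) \<le> norm (z2 - a)" by (rule mono_normD[OF mn z1(1) d1(1)])
  have n2: "norm (z1 - b) \<le> norm (z2 - b)" by (rule mono_normD[OF mn z1(2) d1(2)])
  show ?thesis using n1 n2 eq unfolding sigma_xy_def by linarith
qed

lemma unique_min:
  fixes C :: "'a::real_normed_vector set" and a b z1 z2 :: 'a
  assumes pc: "proper_cone C" and mn: "monotone_norm C" and sc: "strictly_convex TYPE('a)"
  defines "V \<equiv> {z. z - a \<in> C \<and> z - b \<in> C}"
  assumes z1: "z1 \<in> V" "\<forall>w\<in>V. sigma_xy a b z1 \<le> sigma_xy a b w"
    and z2: "z2 \<in> V" "\<forall>w\<in>V. sigma_xy a b z2 \<le> sigma_xy a b w"
  shows "z1 = z2"
proof -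
  let ?s = "sigma_xy a b"
  define u1 where "u1 = z1 - a"
  define u2 where "u2 = z2 - a"
  define v1 where "v1 = z1 - b"
  define v2 where "v2 = z2 - b"
  have C: "u1 \<in> C" "u2 \<in> C" "v1 \<in> C" "v2 \<in> C" using z1(1) z2(1) unfolding V_def u1_def u2_def v1_def v2_def by auto
  have eq: "?s z1 = ?s z2" using z1 z2 by (meson order_antisym)
  define w where "w = (1/2) *\<^sub>R (z1 + z2)"
  have wa: "w - a = (1/2) *\<^sub>R (u1 + u2)" unfolding w_def u1_def u2_def by (simp add: algebra_simps half_half)
  have wb: "w - b = (1/2) *\<^sub>R (v1 + v2)" unfolding w_def v1_def v2_def by (simp add: algebra_simps half_half)
  have "w \<in> V" unfolding V_def using wa wb C cone_add[OF pc] cone_scl[OF pc] by simp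
  then have le: "?s z1 \<le> ?s w" using z1(2) by blast
  have sw: "?s w = (1/2) * norm (u1 + u2) + (1/2) * norm (v1 + v2)"
    unfolding sigma_xy_def wa wb by simp
  have s1: "?s z1 = norm u1 + norm v1" "?s z2 = norm u2 + norm v2" unfolding sigma_xy_def u1_def u2_def v1_def v2_def by simp_all
  have t1: "norm (u1 + u2) \<le> norm u1 + norm u2" "norm (v1 + v2) \<le> norm v1 + norm v2" by (simp_all add: norm_triangle_ineq)
  have ms: "norm (u1 + u2) = norm u1 + norm u2" using le sw s1 eq t1 by linarith
  obtain t where t: "t \<ge> 0" "u1 = t *\<^sub>R u2 \<or> u2 = t *\<^sub>R u1"
    using sc ms unfolding strictly_convex_def by blast
  have e: "z1 - z2 = u1 - u2" unfolding u1_def u2_def by simp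
  have ord: "z1 - z2 \<in> C \<or> z2 - z1 \<in> C"
  proof (cases "u1 = t *\<^sub>R u2")
    case True
    then have e2: "z1 - z2 = (t - 1) *\<^sub>R u2" using e by (simp add: algebra_simps)
    show ?thesis
    proof (cases "t \<ge> 1")
      case True then show ?thesis using e2 cone_scl[OF pc C(2), of "t - 1"] by simp
    next
      case False
      have "z2 - z1 = (1 - t) *\<^sub>R u2" using e2 by (metis minus_diff_eq scaleR_minus_left)
      then show ?thesis using False cone_scl[OF pc C(2), of "1 - t"] by simp
    qed
  next
    case False
    then have u2: "u2 = t *\<^sub>R u1" using t by blast
    then have e2: "z2 - z1 = (t - 1) *\<^sub>R u1" using e by (simp add: algebra_simps)
    show ?thesis
    proof (cases "t \<ge> 1")
      case True then show ?thesis using e2 cone_scl[OF pc C(1), of "t - 1"] by simp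
    next
      case False
      have "z1 - z2 = (1 - t) *\<^sub>R u1" using e2 by (metis minus_diff_eq scaleR_minus_left)
      then show ?thesis using False cone_scl[OF pc C(1), of "1 - t"] by simp
    qed
  qed
  have neq: "norm u1 = norm u2"
  proof -
    have a1: "z1 - a \<in> C" "z1 - b \<in> C" "z2 - a \<in> C" "z2 - b \<in> C" using z1(1) z2(1) V_def by auto
    show ?thesis using ord
    proof
      assume "z1 - z2 \<in> C"
      then show ?thesis using norm_eq_of_order[OF mn a1(3,4) a1(1,2) eq[symmetric]] u1_def u2_def by simp
    next
      assume "z2 - z1 \<in> C"
      then show ?thesis using norm_eq_of_order[OF mn a1 eq] u1_def u2_def by simp
    qed
  qed
  have "u1 = u2"
  proof (cases "u1 = t *\<^sub>R u2")
    case True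
    then have "t * norm u2 = norm u2" using neq t(1) by simp
    then have "t = 1 \<or> norm u2 = 0" by (metis mult_cancel_right1)
    then show ?thesis using True by auto
  next
    case False
    then have u2: "u2 = t *\<^sub>R u1" using t by blast
    then have "t * norm u1 = norm u1" using neq t(1) by simp
    then have "t = 1 \<or> norm u1 = 0" by (metis mult_cancel_right1)
    then show ?thesis using u2 by auto
  qed
  then show ?thesis unfolding u1_def u2_def by simp
qed

lemma per_pair:
  fixes C :: "'a::banach set" and a b :: 'a
  assumes "proper_cone C" and "closed C" and "generating_cone C"
    and "monotone_norm C"
    and "strictly_convex TYPE('a)"
    and "reflexive_space TYPE('a)"
  shows "upper_bounds_c C {a, b} \<noteq> {} \<and> has_unique_minimizer (upper_bounds_c C {a, b}) (sigma_xy a b)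
    \<and> min_upper_bounds_c C {a, b} \<noteq> {} \<and> has_unique_minimizer (min_upper_bounds_c C {a, b}) (sigma_xy a b)
    \<and> upsilon_qsup C a b = mu_qsup C a b"
proof -
  note pc = assms(1) and cl = assms(2) and gen = assms(3) and mn = assms(4) and sc = assms(5) and refl = assms(6)
  let ?s = "sigma_xy a b"
  define V where "V = {z. z - a \<in> C \<and> z - b \<in> C}"
  have VU: "upper_bounds_c C {a, b} = V" unfolding V_def by (rule ub_eq)
  obtain x where x: "x \<in> V" "\<forall>w\<in>V. ?s x \<le> ?s w"
    using exists_min[OF pc cl gen refl, of a b] V_def by blast
  have uniq: "y = x" if "y \<in> V" "\<forall>w\<in>V. ?s y \<le> ?s w" for y
    using unique_min[of C y a b x, OF pc mn sc] that x V_def by blast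
  have minV: "is_minimizer V ?s y \<longleftrightarrow> y = x" for y
    using uniq x unfolding is_minimizer_def by blast
  define M where "M = min_upper_bounds_c C {a, b}"
  have MV: "M \<subseteq> V" unfolding M_def min_upper_bounds_c_def VU by blast
  have xM: "x \<in> M"
    unfolding M_def min_upper_bounds_c_def VU
  proof (intro CollectI conjI allI impI)
    show "x \<in> V" by (rule x(1))
    fix w assume h: "(\<forall>c\<in>{a, b}. cle C c w) \<and> cle C w x"
    then have wV: "w \<in> V" unfolding V_def cle_def by simp
    have xw: "x - w \<in> C" using h unfolding cle_def by simp
    have "norm (w - a) \<le> norm (x - a)"
      by (rule mono_normD[OF mn]) (use wV xw V_def in auto)
    moreover have "norm (w - b) \<le> norm (x - b)"
      by (rule mono_normD[OF mn]) (use wV xw V_def in auto)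
    ultimately have "?s w \<le> ?s x" unfolding sigma_xy_def by simp
    then have "\<forall>v\<in>V. ?s w \<le> ?s v" using x(2) by (meson order_trans)
    then show "w = x" using uniq wV by blast
  qed
  have minM: "is_minimizer M ?s y \<longleftrightarrow> y = x" for y
  proof
    assume "is_minimizer M ?s y"
    then have "y \<in> V" "?s y \<le> ?s x" using MV xM unfolding is_minimizer_def by auto
    then show "y = x" using uniq x(2) by (meson order_trans)
  next
    assume "y = x" then show "is_minimizer M ?s y" using xM x(2) MV unfolding is_minimizer_def by blast
  qed
  have "the_minimizer V ?s = x" unfolding the_minimizer_def using minV by (intro the_equality) auto
  moreover have "the_minimizer M ?s = x" unfolding the_minimizer_def using minM by (intro the_equality) auto
  moreover have "Ex1 (is_minimizer V ?s)" using minV by auto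
  moreover have "Ex1 (is_minimizer M ?s)" using minM by auto
  moreover have "V \<noteq> {}" "M \<noteq> {}" using x(1) xM by auto
  ultimately show ?thesis
    unfolding has_unique_minimizer_def upsilon_qsup_def mu_qsup_def VU M_def[symmetric]
    by simp
qed

theorem corollary6p2:
  fixes C :: "'a::banach set"
  assumes "proper_cone C" and "closed C" and "generating_cone C"
    and "monotone_norm C"
    and "strictly_convex TYPE('a)"
    and "reflexive_space TYPE('a)"
  shows "upsilon_quasi_lattice C \<and> mu_quasi_lattice C \<and>
         (\<forall>x y. upsilon_qsup C x y = mu_qsup C x y)"
  using per_pair[OF assms] assms(2) unfolding upsilon_quasi_lattice_def mu_quasi_lattice_def by blast

end
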